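(* Let $n\in\mathbb{N}$, $N=\{1,\dots,n\}$, and let $(\mathbf v,d)=(v_1,\dots,v_n,d)\in\mathbb{N}^{n+1}$ with $v_i<d$ for all $i$. Write $\frac{v_i}{d}=\frac{s_i}{t_i}$ with $s_i,t_i\in\mathbb{N}$, $\gcd(s_i,t_i)=1$, put $w_i=v_i/d$, $d_{\mathbf w}=\operatorname{lcm}(t_j\mid j\in N)$, and for $k\in\mathbb{N}$ put $M(k)=\{j\in N\mid t_j\mid k\}$ and $\mu(k)=\prod_{j\in M(k)}\left(\frac1{w_j}-1\right)=\prod_{j\in M(k)}\frac{d-v_j}{v_j}$ (empty product $=1$). Let $D_{\mathbf w}=\prod_{j=1}^n\left(\frac1{s_j}\Lambda_{t_j}-\Lambda_1\right)\in\mathbb{Q}\langle S^{UR}\rangle$ and let $L(k)$, $k\in\mathbb{N}$, be its Lefschetz numbers. Let $\rho_{(\mathbf v,d)}(t)=t^{v_1+\dots+v_n}\prod_{j=1}^n\frac{t^{d-v_j}-1}{t^{v_j}-1}\in\mathbb{Q}(t)$. Then: (a) For all $k\in\mathbb{N}$: $M(k)=M(\gcd(k,d_{\mathbf w}))=\{j\in N\mid \frac{d}{\gcd(k,d_{\mathbf w})}\text{ divides } v_j\}$ and $\mu(k)=\mu(\gcd(k,d_{\mathbf w}))$. (b) For all $k\in\mathbb{N}$: $L(k)=L(\gcd(k,d_{\mathbf w}))=(-1)^{n-|M(k)|}\mu(k)\in\mathbb{Q}^*$. (c) If $(\mathbf v,d)$ satisfies condition $\overline{(C2)}$, then $\mu(k)\in\mathbb{N}$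 for all $k\in\mathbb{N}$. Moreover, $(\mathbf v,d)$ satisfies $\overline{(C2)}$ if and only if $\rho_{(\mathbf v,d)}\in\mathbb{Z}[t]$.
   Context: $S^{UR}\subset S^1$ is the set of all roots of unity; $\mathbb{Q}\langle S^{UR}\rangle$ is the group ring over $\mathbb{Q}$ of the multiplicative group $S^{UR}$, with elements $\sum_j b_j\langle\zeta_j\rangle$ ($b_j\in\mathbb{Q}$, $\zeta_j\in S^{UR}$) and product $\langle\zeta_1\rangle\langle\zeta_2\rangle=\langle\zeta_1\zeta_2\rangle$. For $m\in\mathbb{N}$, $\Lambda_m=\sum_{a=0}^{m-1}\langle e^{2\pi i a/m}\rangle$ (so $\Lambda_1=\langle1\rangle$ is the unit). The Lefschetz numbers of an element $\sum_j b_j\langle\zeta_j\rangle$ are $L(k)=\sum_j b_j\zeta_j^k\in\mathbb{C}$ for $k\in\mathbb{N}$. For $J\subset N$ and $c\in\mathbb{Z}$ let $(\mathbb{Z}^J)_c=\{\alpha\in\mathbb{Z}^n\mid \alpha_i=0\text{ for } i\notin J,\ \sum_i\alpha_iv_i=c\}$. Condition $\overline{(C2)}$: for every nonempty $J\subset N$ there exists $K\subset N$ with $|K|=|J|$ such that $(\mathbb{Z}^J)_{d-v_k}\neq\emptyset$ for all $k\in K$ (equivalently, $\gcd(v_j\mid j\in J)$ divides $d-v_k$ for all $k\in K$). *)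

theory Defs
  imports Complex_Main "HOL-Computational_Algebra.Polynomial" "HOL-Computational_Algebra.Fraction_Field"
begin

text \<open>Elements of the group ring Q<S^UR> are represented as functions complex => rat
  which are finitely supported on roots of unity (all elements built below are).\<close>

type_synonym grelem = "complex \<Rightarrow> rat"

definition gr_basis :: "complex \<Rightarrow> grelem" where
  "gr_basis \<zeta> = (\<lambda>z. if z = \<zeta> then 1 else 0)"

definition gr_mult :: "grelem \<Rightarrow> grelem \<Rightarrow> grelem" where
  "gr_mult x y = (\<lambda>z. \<Sum>p\<in>{(a, b). x a \<noteq> 0 \<and> y b \<noteq> 0 \<and> a * b = z}. x (fst p) * y (snd p))"

definition Lambda :: "nat \<Rightarrow> grelem" where
  "Lambda m = (\<lambda>z. \<Sum>a<m. gr_basis (exp (2 * of_real pi * \<i> * of_nat a / of_nat m)) z)"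

fun gr_prod :: "(nat \<Rightarrow> grelem) \<Rightarrow> nat \<Rightarrow> grelem" where
  "gr_prod f 0 = gr_basis 1"
| "gr_prod f (Suc n) = gr_mult (gr_prod f n) (f (Suc n))"

definition lefschetz :: "grelem \<Rightarrow> nat \<Rightarrow> complex" where
  "lefschetz x k = (\<Sum>z\<in>{z. x z \<noteq> 0}. of_rat (x z) * z ^ k)"

definition sn :: "(nat \<Rightarrow> nat) \<Rightarrow> nat \<Rightarrow> nat \<Rightarrow> nat" where
  "sn v d i = v i div gcd (v i) d"
definition tn :: "(nat \<Rightarrow> nat) \<Rightarrow> nat \<Rightarrow> nat \<Rightarrow> nat" where
  "tn v d i = d div gcd (v i) d"

definition dw :: "nat \<Rightarrow> (nat \<Rightarrow> nat) \<Rightarrow> nat \<Rightarrow> nat" where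
  "dw n v d = Lcm (tn v d ` {1..n})"

definition Mset :: "nat \<Rightarrow> (nat \<Rightarrow> nat) \<Rightarrow> nat \<Rightarrow> nat \<Rightarrow> nat set" where
  "Mset n v d k = {j \<in> {1..n}. tn v d j dvd k}"

definition mu :: "nat \<Rightarrow> (nat \<Rightarrow> nat) \<Rightarrow> nat \<Rightarrow> nat \<Rightarrow> rat" where
  "mu n v d k = (\<Prod>j\<in>Mset n v d k. of_nat (d - v j) / of_nat (v j))"

definition Dw :: "nat \<Rightarrow> (nat \<Rightarrow> nat) \<Rightarrow> nat \<Rightarrow> grelem" where
  "Dw n v d = gr_prod (\<lambda>j. (\<lambda>z. (1 / of_nat (sn v d j)) * Lambda (tn v d j) z - Lambda 1 z)) n"

definition ZJ :: "nat \<Rightarrow> (nat \<Rightarrow> nat) \<Rightarrow> nat set \<Rightarrow> int \<Rightarrow> (nat \<Rightarrow> int) set" where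
  "ZJ n v J c = {\<alpha>. (\<forall>i. i \<notin> J \<longrightarrow> \<alpha> i = 0) \<and> (\<Sum>i\<in>{1..n}. \<alpha> i * int (v i)) = c}"

definition C2bar :: "nat \<Rightarrow> (nat \<Rightarrow> nat) \<Rightarrow> nat \<Rightarrow> bool" where
  "C2bar n v d \<longleftrightarrow> (\<forall>J \<subseteq> {1..n}. J \<noteq> {} \<longrightarrow>
     (\<exists>K \<subseteq> {1..n}. card K = card J \<and> (\<forall>k\<in>K. ZJ n v J (int d - int (v k)) \<noteq> {})))"

definition rho :: "nat \<Rightarrow> (nat \<Rightarrow> nat) \<Rightarrow> nat \<Rightarrow> rat poly fract" where
  "rho n v d = Fract (monom 1 (\<Sum>j\<in>{1..n}. v j)) 1 *
     (\<Prod>j\<in>{1..n}. Fract (monom 1 (d - v j) - 1) (monom 1 (v j) - 1))"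

end

theory Submission
  imports Defs "HOL-Analysis.Analysis" "HOL-Computational_Algebra.Fundamental_Theorem_Algebra"
begin


definition ip :: "int poly \<Rightarrow> 'a::comm_ring_1 poly" where "ip p = map_poly of_int p"

lemma coeff_ip [simp]: "coeff (ip p) n = of_int (coeff p n)"
  by (simp add: ip_def coeff_map_poly)

lemma ip_add [simp]: "ip (p + q) = ip p + ip q"
  by (rule poly_eqI) simp
lemma ip_diff [simp]: "ip (p - q) = ip p - ip q"
  by (rule poly_eqI) simp
lemma ip_mult [simp]: "ip (p * q) = ip p * ip q"
  by (rule poly_eqI) (simp add: coeff_mult of_int_sum)
lemma ip_1 [simp]: "ip 1 = 1"
  by (simp add: ip_def)
lemma ip_0 [simp]: "ip 0 = 0"
  by (simp add: ip_def)
lemma ip_monom [simp]: "ip (monom 1 a) = monom 1 a"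
  by (simp add: ip_def map_poly_monom)
lemma ip_prod: "ip (\<Prod>j\<in>I. f j) = (\<Prod>j\<in>I. ip (f j))"
  by (induction I rule: infinite_finite_induct) auto
lemma ip_inj: "(ip p :: 'a::{comm_ring_1,ring_char_0} poly) = ip q \<longleftrightarrow> p = q"
proof
  assume "(ip p :: 'a poly) = ip q"
  then have "\<And>n. (of_int (coeff p n) :: 'a) = of_int (coeff q n)"
    by (metis coeff_ip)
  then show "p = q" by (intro poly_eqI) simp
qed simp
lemma ip_eq0: "(ip p :: 'a::{comm_ring_1,ring_char_0} poly) = 0 \<longleftrightarrow> p = 0"
  using ip_inj[of p 0] by simp
lemma degree_ip: "degree (ip p :: 'a::{comm_ring_1,ring_char_0} poly) = degree p"
  by (simp add: ip_def degree_map_poly)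

definition pw :: "nat \<Rightarrow> 'a::comm_ring_1 poly" where "pw a = monom 1 a - 1"
definition PP :: "nat set \<Rightarrow> (nat \<Rightarrow> nat) \<Rightarrow> 'a::comm_ring_1 poly" where
  "PP I f = (\<Prod>j\<in>I. pw (f j))"

lemma ip_pw [simp]: "ip (pw a) = pw a" by (simp add: pw_def)
lemma ip_PP [simp]: "ip (PP I f) = PP I f" by (simp add: PP_def ip_prod)

lemma lc_pw: "a > 0 \<Longrightarrow> lead_coeff (pw a :: 'a::idom poly) = 1"
proof -
  assume a: "a > 0"
  have c: "coeff (pw a :: 'a poly) a = 1" using a by (simp add: pw_def coeff_monom)
  have "degree (pw a :: 'a poly) \<le> a"
    unfolding pw_def by (intro degree_diff_le) (auto simp: degree_monom_le)
  moreover have "degree (pw a :: 'a poly) \<ge> a" using c by (intro le_degree) simp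
  ultimately have "degree (pw a :: 'a poly) = a" by simp
  then show ?thesis using c by simp
qed

lemma lc_PP: "\<forall>j\<in>I. f j > 0 \<Longrightarrow> lead_coeff (PP I f :: 'a::idom poly) = 1"
  by (simp add: PP_def lead_coeff_prod lc_pw)

lemma PP_nz: "\<forall>j\<in>I. f j > 0 \<Longrightarrow> (PP I f :: 'a::idom poly) \<noteq> 0"
  using lc_PP[of I f] by (metis leading_coeff_0_iff one_neq_zero)

lemma order_pw: assumes a: "a > 0"
  shows "order x (pw a :: complex poly) = (if x ^ a = 1 then 1 else 0)"
proof -
  have nz: "(pw a :: complex poly) \<noteq> 0" using lc_pw[OF a] by (metis leading_coeff_0_iff one_neq_zero)
  have ev: "poly (pw a) x = x ^ a - 1" by (simp add: pw_def poly_monom)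
  have "rsquarefree (pw a :: complex poly)"
  proof (unfold rsquarefree_roots, intro allI notI)
    fix y assume h: "poly (pw a) y = 0 \<and> poly (pderiv (pw a)) y = (0::complex)"
    then have "y ^ a = 1" by (simp add: pw_def poly_monom)
    then have "y \<noteq> 0" using a by (metis power_0_left zero_neq_one not_gr0)
    moreover have "poly (pderiv (pw a)) y = of_nat a * y ^ (a - 1)"
      by (simp add: pw_def pderiv_diff pderiv_monom poly_monom)
    ultimately show False using h a by simp
  qed
  show ?thesis
  proof (cases "x ^ a = 1")
    case True
    then show ?thesis using rsquarefree_root_order[of "pw a" x] \<open>rsquarefree _\<close> nz ev by simp
  next
    case False
    then show ?thesis using ev by (simp add: order_0I)
  qed
qed

lemma order_PP: assumes "finite I" "\<forall>j\<in>I. f j > 0"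
  shows "order x (PP I f :: complex poly) = card {j\<in>I. x ^ f j = 1}"
  using assms
proof (induction I rule: finite_induct)
  case empty
  then show ?case by (simp add: PP_def order_0I)
next
  case (insert j I)
  have nz: "(PP (insert j I) f :: complex poly) \<noteq> 0" using PP_nz insert.prems by blast
  have e: "(PP (insert j I) f :: complex poly) = pw (f j) * PP I f"
    using insert by (simp add: PP_def)
  have "{i \<in> insert j I. x ^ f i = 1} = (if x ^ f j = 1 then insert j {i\<in>I. x ^ f i = 1} else {i\<in>I. x ^ f i = 1})"
    by auto
  moreover have "finite {i\<in>I. x ^ f i = 1}" using insert by simp
  moreover have "j \<notin> {i\<in>I. x ^ f i = 1}" using insert by simp
  ultimately show ?case using nz insert
    by (simp add: e order_mult order_pw)
qed




lemma cdvd: fixes p q :: "complex poly"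
  assumes "q \<noteq> 0" "\<And>x. order x q \<le> order x p" shows "q dvd p"
proof (cases "p = 0")
  case True then show ?thesis by simp
next
  case False
  have "proots q \<subseteq># proots p" using assms False by (simp add: subseteq_mset_def)
  then obtain R where R: "proots p = proots q + R" by (metis subset_mset.le_iff_add)
  have "p = smult (lead_coeff p) (\<Prod>x\<in>#proots p. [:-x,1:])"
    by (rule complex_poly_decompose_multiset[symmetric])
  also have "\<dots> = smult (lead_coeff p) ((\<Prod>x\<in>#proots q. [:-x,1:]) * (\<Prod>x\<in>#R. [:-x,1:]))"
    by (simp add: R)
  finally have A: "(\<Prod>x\<in>#proots q. [:-x,1:]) dvd p"
    by (metis dvd_smult dvd_triv_left)
  have "q = smult (lead_coeff q) (\<Prod>x\<in>#proots q. [:-x,1:])"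
    by (rule complex_poly_decompose_multiset[symmetric])
  then have "q dvd (\<Prod>x\<in>#proots q. [:-x,1:])"
    using assms(1) by (metis smult_dvd_iff dvd_refl)
  then show ?thesis using A by (rule dvd_trans)
qed

lemma PP_dvd: assumes "finite I" "\<forall>j\<in>I. a j > 0" "\<forall>j\<in>I. b j > 0"
  "\<And>x::complex. card {j\<in>I. x ^ b j = 1} \<le> card {j\<in>I. x ^ a j = 1}"
  shows "(PP I b :: int poly) dvd PP I a"
proof -
  let ?g = "PP I b :: int poly"
  let ?f = "PP I a :: int poly"
  have g0: "?g \<noteq> 0" using PP_nz assms(3) by blast
  obtain q r where qr: "pseudo_divmod ?f ?g = (q,r)" by fastforce
  have lc: "coeff ?g (degree ?g) = 1" using lc_PP assms(3) by blast
  from pseudo_divmod(1)[OF g0 qr] lc have e: "?f = ?g * q + r" by simp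
  have rr: "r = 0 \<or> degree r < degree ?g" by (rule pseudo_divmod(2)[OF g0 qr])
  have cd: "(PP I b :: complex poly) dvd PP I a"
    by (rule cdvd) (use PP_nz assms in \<open>auto simp: order_PP\<close>)
  have "(ip ?f :: complex poly) = ip ?g * ip q + ip r" using e by simp
  hence "(PP I a :: complex poly) = PP I b * ip q + ip r" by simp
  hence dr: "(PP I b::complex poly) dvd ip r" using cd by (metis dvd_add_right_iff dvd_triv_left)
  have "r = 0"
  proof (rule ccontr)
    assume "r \<noteq> 0"
    then have "ip r \<noteq> (0::complex poly)" by (simp add: ip_eq0)
    then have "degree (PP I b :: complex poly) \<le> degree (ip r :: complex poly)"
      using dr dvd_imp_degree_le by blast
    moreover have "degree (PP I b :: complex poly) = degree ?g"
      using degree_ip[of ?g, where 'a=complex] by simp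
    ultimately show False using rr \<open>r \<noteq> 0\<close> degree_ip[of r, where 'a=complex] by simp
  qed
  then show ?thesis using e by simp
qed

lemma PP_dvd_conv: assumes "finite I" "\<forall>j\<in>I. a j > 0" "\<forall>j\<in>I. b j > 0"
  "monom 1 S * PP I a = p * (PP I b :: int poly)" "x \<noteq> (0::complex)"
  shows "card {j\<in>I. x ^ b j = 1} \<le> card {j\<in>I. x ^ a j = 1}"
proof -
  have "ip (monom 1 S * PP I a) = (ip (p * PP I b) :: complex poly)" by (simp only: assms)
  hence e: "monom 1 S * (PP I a :: complex poly) = ip p * PP I b" by simp
  have m0: "(monom 1 S :: complex poly) \<noteq> 0" by simp
  have nz: "monom 1 S * (PP I a::complex poly) \<noteq> 0" using m0 PP_nz assms(2) by auto
  then have nz2: "ip p * (PP I b::complex poly) \<noteq> 0" using e by simp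
  have o0: "order x (monom 1 S :: complex poly) = 0"
    by (rule order_0I) (simp add: poly_monom assms(5))
  have "order x (monom 1 S * (PP I a::complex poly)) = order x (PP I a :: complex poly)"
    using order_mult[OF nz] o0 by simp
  moreover have "order x (ip p * (PP I b::complex poly)) = order x (ip p :: complex poly) + order x (PP I b :: complex poly)"
    using order_mult[OF nz2] by simp
  ultimately have "order x (PP I b :: complex poly) \<le> order x (PP I a :: complex poly)"
    using e by simp
  then show ?thesis using assms by (simp add: order_PP)
qed




lemma root_unity_dvd: assumes m: "m > 0"
  shows "(exp (2 * of_real pi * \<i> / of_nat m)) ^ a = 1 \<longleftrightarrow> m dvd a"
proof -
  have e: "(exp (2 * of_real pi * \<i> / of_nat m)) ^ a = exp (of_nat a * (2 * of_real pi * \<i> / of_nat m))"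
    by (rule exp_of_nat_mult[symmetric])
  have "exp (of_nat a * (2 * of_real pi * \<i> / of_nat m)) = 1 \<longleftrightarrow>
        (\<exists>k::int. real a * (2 * pi) / real m = 2 * real_of_int k * pi)"
    by (simp add: exp_eq_1)
  also have "\<dots> \<longleftrightarrow> m dvd a"
  proof
    assume "\<exists>k::int. real a * (2 * pi) / real m = 2 * real_of_int k * pi"
    then obtain k :: int where "real a * (2 * pi) / real m = 2 * real_of_int k * pi" by blast
    then have "real a = of_int k * real m" using m by (simp add: field_simps)
    then have "int a = k * int m" by (metis of_int_eq_iff of_int_mult of_int_of_nat_eq)
    then have "int m dvd int a" by simp
    then show "m dvd a" by simp
  next
    assume "m dvd a"
    then obtain k where "a = m * k" by blast
    then have "real a * (2 * pi) / real m = 2 * real_of_int (int k) * pi" using m by simp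
    then show "\<exists>k::int. real a * (2 * pi) / real m = 2 * real_of_int k * pi" by blast
  qed
  finally show ?thesis using e by simp
qed

lemma powi_sum: "(x::complex) \<noteq> 0 \<Longrightarrow> x powi (\<Sum>i\<in>A. f i) = (\<Prod>i\<in>A. x powi f i)"
  by (induction A rule: infinite_finite_induct) (auto simp: power_int_add)

lemma C2_count:
  fixes x :: complex
  assumes C: "C2bar n v d" and pos: "\<forall>i\<in>{1..n}. 0 < v i \<and> v i < d"
    and M: "M = {j\<in>{1..n}. m dvd v j}" and md: "m dvd d"
  shows "card {j\<in>M. x ^ v j = 1} \<le> card {j\<in>M. x ^ (d - v j) = 1}"
proof (cases "{j\<in>M. x ^ v j = 1} = {}")
  case True then show ?thesis by (subst True) simp
next
  case False
  define J where "J = {j\<in>M. x ^ v j = 1}"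
  have JN: "J \<subseteq> {1..n}" using M J_def by auto
  obtain K where K: "K \<subseteq> {1..n}" "card K = card J"
      "\<forall>k\<in>K. ZJ n v J (int d - int (v k)) \<noteq> {}"
    using C JN False unfolding C2bar_def J_def by blast
  obtain j0 where j0: "j0 \<in> J" using False J_def by blast
  have x0: "x \<noteq> 0"
  proof
    assume "x = 0"
    moreover have "x ^ v j0 = 1" "v j0 > 0" using j0 J_def M pos by auto
    ultimately show False by (simp add: power_0_left)
  qed
  have "K \<subseteq> {j\<in>M. x ^ (d - v j) = 1}"
  proof
    fix k assume kK: "k \<in> K"
    then obtain \<alpha> where \<alpha>: "\<forall>i. i \<notin> J \<longrightarrow> \<alpha> i = 0"
      "(\<Sum>i\<in>{1..n}. \<alpha> i * int (v i)) = int d - int (v k)"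
      using K(3) unfolding ZJ_def by blast
    have kn: "k \<in> {1..n}" using kK K by auto
    have "int m dvd (\<Sum>i\<in>{1..n}. \<alpha> i * int (v i))"
    proof (rule dvd_sum)
      fix i assume "i \<in> {1..n}"
      show "int m dvd \<alpha> i * int (v i)"
      proof (cases "i \<in> J")
        case True then have "m dvd v i" using J_def M by auto
        then show ?thesis by simp
      next
        case False then show ?thesis using \<alpha> by simp
      qed
    qed
    then have "int m dvd int d - int (v k)" using \<alpha> by simp
    moreover have "int m dvd int d" using md by simp
    ultimately have "int m dvd int (v k)" by (metis dvd_diff_right_iff dvd_diff)
    then have mk: "m dvd v k" by simp
    have "x powi (\<Sum>i\<in>{1..n}. \<alpha> i * int (v i)) = (\<Prod>i\<in>{1..n}. x powi (\<alpha> i * int (v i)))"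
      by (rule powi_sum[OF x0])
    also have "\<dots> = 1"
    proof (rule prod.neutral, intro ballI)
      fix i assume "i \<in> {1..n}"
      show "x powi (\<alpha> i * int (v i)) = 1"
      proof (cases "i \<in> J")
        case True then have "x ^ v i = 1" using J_def by auto
        then show ?thesis by (simp add: mult.commute[of "\<alpha> i"] power_int_mult)
      next
        case False then show ?thesis using \<alpha> by simp
      qed
    qed
    finally have "x powi (int d - int (v k)) = 1" using \<alpha> by simp
    moreover have "int d - int (v k) = int (d - v k)"
    proof -
      have "v k \<le> d" using pos kn by (meson less_imp_le)
      then show ?thesis by simp
    qed
    ultimately have "x powi int (d - v k) = 1" by (simp only:)
    then have "x ^ (d - v k) = 1" by (simp only: power_int_of_nat)
    then show "k \<in> {j\<in>M. x ^ (d - v j) = 1}" using kn mk M by auto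
  qed
  moreover have "finite {j\<in>M. x ^ (d - v j) = 1}" using M by simp
  ultimately have "card K \<le> card {j\<in>M. x ^ (d - v j) = 1}" by (rule card_mono[rotated])
  then show ?thesis using K(2) J_def by simp
qed




lemma count_C2:
  assumes pos: "\<forall>i\<in>{1..n}. 0 < v i \<and> v i < d"
    and cnt: "\<And>x::complex. x \<noteq> 0 \<Longrightarrow> card {j\<in>{1..n}. x ^ v j = 1} \<le> card {j\<in>{1..n}. x ^ (d - v j) = 1}"
  shows "C2bar n v d"
  unfolding C2bar_def
proof (intro allI impI)
  fix J assume JN: "J \<subseteq> {1..n}" and Jne: "J \<noteq> {}"
  define G where "G = {c::int. ZJ n v J c \<noteq> {}}"
  have G_lin: "c - z * e \<in> G" if "c \<in> G" "e \<in> G" for c e z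
  proof -
    have "ZJ n v J c \<noteq> {}" using that(1) unfolding G_def by simp
    then obtain \<alpha> where "\<alpha> \<in> ZJ n v J c" by blast
    then have a: "\<forall>i. i \<notin> J \<longrightarrow> \<alpha> i = 0" "(\<Sum>i\<in>{1..n}. \<alpha> i * int (v i)) = c"
      unfolding ZJ_def by simp_all
    have "ZJ n v J e \<noteq> {}" using that(2) unfolding G_def by simp
    then obtain \<beta> where "\<beta> \<in> ZJ n v J e" by blast
    then have b: "\<forall>i. i \<notin> J \<longrightarrow> \<beta> i = 0" "(\<Sum>i\<in>{1..n}. \<beta> i * int (v i)) = e"
      unfolding ZJ_def by simp_all
    have "(\<Sum>i\<in>{1..n}. (\<alpha> i - z * \<beta> i) * int (v i)) =
          (\<Sum>i\<in>{1..n}. \<alpha> i * int (v i)) - z * (\<Sum>i\<in>{1..n}. \<beta> i * int (v i))"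
      by (simp add: sum_subtractf sum_distrib_left left_diff_distrib mult.assoc)
    then have "(\<lambda>i. \<alpha> i - z * \<beta> i) \<in> ZJ n v J (c - z * e)"
      using a b unfolding ZJ_def by simp
    then have "ZJ n v J (c - z * e) \<noteq> {}" by (metis empty_iff)
    then show ?thesis unfolding G_def by simp
  qed
  have "(\<lambda>_. 0) \<in> ZJ n v J 0" unfolding ZJ_def by simp
  then have "ZJ n v J 0 \<noteq> {}" by (metis empty_iff)
  then have G0: "0 \<in> G" unfolding G_def by simp
  have Gv: "int (v j) \<in> G" if "j \<in> J" for j
  proof -
    have jn: "j \<in> {1..n}" using that JN by auto
    have "(\<Sum>i\<in>{1..n}. (if i = j then 1 else 0) * int (v i)) = (\<Sum>i\<in>{1..n}. if i = j then int (v i) else 0)"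
      by (rule sum.cong) auto
    also have "\<dots> = int (v j)" using jn by simp
    finally have "(\<lambda>i. if i = j then 1 else 0) \<in> ZJ n v J (int (v j))"
      using that unfolding ZJ_def by auto
    then have "ZJ n v J (int (v j)) \<noteq> {}" by (metis empty_iff)
    then show ?thesis unfolding G_def by simp
  qed
  obtain j0 where j0: "j0 \<in> J" using Jne by blast
  define g where "g = (LEAST c::nat. c > 0 \<and> int c \<in> G)"
  have j0p: "v j0 > 0 \<and> int (v j0) \<in> G" using Gv[OF j0] pos j0 JN by auto
  have gP: "g > 0 \<and> int g \<in> G" unfolding g_def by (rule LeastI[of _ "v j0"], rule j0p)
  have gmin: "g \<le> c" if "c > 0" "int c \<in> G" for c unfolding g_def by (rule Least_le) (use that in simp)
  have gdvd: "int g dvd c" if "c \<in> G" for c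
  proof -
    have "c - (c div int g) * int g \<in> G"
      using G_lin[of c "int g" "c div int g"] that gP by simp
    then have r: "c mod int g \<in> G" by (simp only: minus_div_mult_eq_mod)
    have "c mod int g = 0"
    proof (rule ccontr)
      assume "c mod int g \<noteq> 0"
      moreover have "c mod int g \<ge> 0" "c mod int g < int g" using gP by auto
      ultimately have "nat (c mod int g) > 0" "int (nat (c mod int g)) \<in> G" using r by auto
      then have "g \<le> nat (c mod int g)" using gmin by blast
      then have "int g \<le> int (nat (c mod int g))" by (simp only: of_nat_le_iff)
      also have "\<dots> = c mod int g" using \<open>0 \<le> c mod int g\<close> by simp
      finally show False using \<open>c mod int g < int g\<close> by simp
    qed
    then show ?thesis by (simp add: dvd_eq_mod_eq_0)
  qed
  have gmul: "c \<in> G" if h: "int g dvd c" for c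
  proof -
    obtain z where "c = int g * z" using h by (elim dvdE)
    then have "c = 0 - (- z) * int g" by simp
    then show ?thesis using G_lin[OF G0, of "int g" "- z"] gP by simp
  qed
  define x where "x = exp (2 * of_real pi * \<i> / of_nat g)"
  have x0: "x \<noteq> 0" unfolding x_def by simp
  have xr: "x ^ a = 1 \<longleftrightarrow> g dvd a" for a unfolding x_def using root_unity_dvd gP by blast
  have "J \<subseteq> {j\<in>{1..n}. x ^ v j = 1}"
  proof
    fix j assume "j \<in> J"
    then have "int g dvd int (v j)" using gdvd Gv by blast
    then show "j \<in> {j\<in>{1..n}. x ^ v j = 1}" using \<open>j \<in> J\<close> JN xr by auto
  qed
  then have "card J \<le> card {j\<in>{1..n}. x ^ v j = 1}" by (intro card_mono) auto
  also have "\<dots> \<le> card {j\<in>{1..n}. x ^ (d - v j) = 1}" using cnt x0 by blast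
  finally obtain K where K: "K \<subseteq> {j\<in>{1..n}. x ^ (d - v j) = 1}" "card K = card J"
    by (meson obtain_subset_with_card_n)
  have "\<forall>k\<in>K. ZJ n v J (int d - int (v k)) \<noteq> {}"
  proof
    fix k assume "k \<in> K"
    then have kn: "k \<in> {1..n}" and "g dvd (d - v k)" using K xr by auto
    then have "int g dvd int (d - v k)" by (simp only: int_dvd_int_iff)
    moreover have "int (d - v k) = int d - int (v k)"
    proof -
      have "v k \<le> d" using pos kn by (meson less_imp_le)
      then show ?thesis by simp
    qed
    ultimately have "int d - int (v k) \<in> G" using gmul by simp
    then show "ZJ n v J (int d - int (v k)) \<noteq> {}" unfolding G_def by simp
  qed
  then show "\<exists>K\<subseteq>{1..n}. card K = card J \<and> (\<forall>k\<in>K. ZJ n v J (int d - int (v k)) \<noteq> {})"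
    using K by blast
qed




lemma lef_sup: "finite A \<Longrightarrow> {z. x z \<noteq> 0} \<subseteq> A \<Longrightarrow>
   lefschetz x k = (\<Sum>z\<in>A. of_rat (x z) * z ^ k)"
  unfolding lefschetz_def by (rule sum.mono_neutral_left) auto

lemma gr_mult_set: "{(a, b). x a \<noteq> 0 \<and> y b \<noteq> 0 \<and> a * b = z} =
   {p \<in> {a. x a \<noteq> 0} \<times> {b. y b \<noteq> 0}. (\<lambda>(a,b). a * b) p = z}"
  by auto

lemma gr_mult_supp: "{z. gr_mult x y z \<noteq> 0} \<subseteq> (\<lambda>(a,b). a * b) ` ({a. x a \<noteq> 0} \<times> {b. y b \<noteq> 0})"
proof
  fix z assume "z \<in> {z. gr_mult x y z \<noteq> 0}"
  then have nz: "gr_mult x y z \<noteq> 0" by simp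
  have "{(a, b). x a \<noteq> 0 \<and> y b \<noteq> 0 \<and> a * b = z} \<noteq> {}"
  proof
    assume e: "{(a, b). x a \<noteq> 0 \<and> y b \<noteq> 0 \<and> a * b = z} = {}"
    have "gr_mult x y z = 0" unfolding gr_mult_def e by simp
    then show False using nz by simp
  qed
  then obtain a b where "x a \<noteq> 0" "y b \<noteq> 0" "a * b = z" by blast
  then show "z \<in> (\<lambda>(a,b). a * b) ` ({a. x a \<noteq> 0} \<times> {b. y b \<noteq> 0})"
    by (intro image_eqI[of _ _ "(a,b)"]) auto
qed

lemma gr_mult_fin: "finite {a. x a \<noteq> 0} \<Longrightarrow> finite {b. y b \<noteq> 0} \<Longrightarrow> finite {z. gr_mult x y z \<noteq> 0}"
  by (rule finite_subset[OF gr_mult_supp]) (intro finite_imageI finite_cartesian_product)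

lemma lef_mult:
  assumes fx: "finite {a. x a \<noteq> 0}" and fy: "finite {b. y b \<noteq> 0}"
  shows "lefschetz (gr_mult x y) k = lefschetz x k * lefschetz y k"
proof -
  define P where "P = {a. x a \<noteq> 0} \<times> {b. y b \<noteq> 0}"
  define f :: "complex \<times> complex \<Rightarrow> complex" where "f = (\<lambda>(a,b). a * b)"
  define h where "h = (\<lambda>p. of_rat (x (fst p)) * of_rat (y (snd p)) * (f p) ^ k)"
  have fP: "finite P" using fx fy P_def by simp
  have "lefschetz x k * lefschetz y k =
      (\<Sum>a\<in>{a. x a \<noteq> 0}. of_rat (x a) * a ^ k) * (\<Sum>b\<in>{b. y b \<noteq> 0}. of_rat (y b) * b ^ k)"
    unfolding lefschetz_def by simp
  also have "\<dots> = (\<Sum>p\<in>P. h p)"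
    unfolding P_def h_def f_def sum_product sum.cartesian_product
    by (rule sum.cong) (auto simp: power_mult_distrib)
  also have "\<dots> = (\<Sum>z\<in>f ` P. \<Sum>p\<in>{p\<in>P. f p = z}. h p)"
    by (rule sum.image_gen[OF fP])
  also have "\<dots> = (\<Sum>z\<in>f ` P. of_rat (gr_mult x y z) * z ^ k)"
  proof (rule sum.cong[OF refl])
    fix z
    have seteq: "{p\<in>P. f p = z} = {(a, b). x a \<noteq> 0 \<and> y b \<noteq> 0 \<and> a * b = z}"
      unfolding P_def f_def by auto
    have "(\<Sum>p\<in>{p\<in>P. f p = z}. h p) = (\<Sum>p\<in>{p\<in>P. f p = z}. of_rat (x (fst p) * y (snd p)) * z ^ k)"
      unfolding h_def by (rule sum.cong) (auto simp: of_rat_mult)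
    also have "\<dots> = of_rat (\<Sum>p\<in>{p\<in>P. f p = z}. x (fst p) * y (snd p)) * z ^ k"
      by (simp add: of_rat_sum sum_distrib_right)
    also have "\<dots> = of_rat (gr_mult x y z) * z ^ k"
      unfolding seteq gr_mult_def by simp
    finally show "(\<Sum>p\<in>{p\<in>P. f p = z}. h p) = of_rat (gr_mult x y z) * z ^ k" .
  qed
  also have "\<dots> = lefschetz (gr_mult x y) k"
  proof -
    have sub: "{z. gr_mult x y z \<noteq> 0} \<subseteq> f ` P" unfolding f_def P_def by (rule gr_mult_supp)
    have "finite (f ` P)" using fP by simp
    then show ?thesis by (rule lef_sup[symmetric, OF _ sub])
  qed
  finally show ?thesis by simp
qed

lemma gr_prod_fin_lef:
  assumes "\<forall>j\<in>{1..n}. finite {z. f j z \<noteq> 0}"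
  shows "finite {z. gr_prod f n z \<noteq> 0} \<and> lefschetz (gr_prod f n) k = (\<Prod>j\<in>{1..n}. lefschetz (f j) k)"
  using assms
proof (induction n)
  case 0
  have S: "{z. gr_basis 1 z \<noteq> 0} = {1}" by (auto simp: gr_basis_def)
  have "lefschetz (gr_basis 1) k = 1" unfolding lefschetz_def S by (simp add: gr_basis_def)
  then show ?case using S by simp
next
  case (Suc n)
  then have IH: "finite {z. gr_prod f n z \<noteq> 0}" "lefschetz (gr_prod f n) k = (\<Prod>j\<in>{1..n}. lefschetz (f j) k)"
    by auto
  have fS: "finite {z. f (Suc n) z \<noteq> 0}" using Suc.prems by auto
  have g: "gr_prod f (Suc n) = gr_mult (gr_prod f n) (f (Suc n))" by simp
  have "lefschetz (gr_prod f (Suc n)) k = lefschetz (gr_prod f n) k * lefschetz (f (Suc n)) k"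
    unfolding g by (rule lef_mult[OF IH(1) fS])
  also have "\<dots> = (\<Prod>j\<in>{1..Suc n}. lefschetz (f j) k)"
    unfolding IH(2) by (simp add: prod.cl_ivl_Suc)
  finally show ?case unfolding g using gr_mult_fin[OF IH(1) fS] by simp
qed

definition EE :: "nat \<Rightarrow> complex set" where
  "EE m = (\<lambda>a. exp (2 * of_real pi * \<i> * of_nat a / of_nat m)) ` {..<m}"

lemma EE_fin: "finite (EE m)" by (simp add: EE_def)

lemma Lambda_supp: "{z. Lambda m z \<noteq> 0} \<subseteq> EE m"
proof
  fix z assume "z \<in> {z. Lambda m z \<noteq> 0}"
  then have "(\<Sum>a<m. gr_basis (exp (2 * of_real pi * \<i> * of_nat a / of_nat m)) z) \<noteq> 0"
    by (simp add: Lambda_def)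
  then obtain a where "a < m" "gr_basis (exp (2 * of_real pi * \<i> * of_nat a / of_nat m)) z \<noteq> 0"
    by (metis (no_types, lifting) lessThan_iff sum.neutral)
  then show "z \<in> EE m" unfolding EE_def gr_basis_def by (auto split: if_splits)
qed

lemma lef_Lambda: "lefschetz (Lambda m) k = (\<Sum>a<m. exp (2 * of_real pi * \<i> * of_nat a / of_nat m) ^ k)"
proof -
  let ?e = "\<lambda>a. exp (2 * of_real pi * \<i> * of_nat a / of_nat m)"
  have "lefschetz (Lambda m) k = (\<Sum>z\<in>EE m. of_rat (Lambda m z) * z ^ k)"
    by (rule lef_sup[OF EE_fin Lambda_supp])
  also have "\<dots> = (\<Sum>z\<in>EE m. \<Sum>a<m. (if z = ?e a then z ^ k else 0))"
    unfolding Lambda_def gr_basis_def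
  proof (rule sum.cong[OF refl])
    fix z
    have "of_rat (\<Sum>a<m. (if z = ?e a then 1 else 0)) * z ^ k = (\<Sum>a<m. of_rat (if z = ?e a then 1 else 0) * z ^ k)"
      by (simp add: of_rat_sum sum_distrib_right)
    also have "\<dots> = (\<Sum>a<m. (if z = ?e a then z ^ k else 0))"
      by (rule sum.cong[OF refl]) simp
    finally show "of_rat (\<Sum>a<m. (if z = ?e a then 1 else 0)) * z ^ k = (\<Sum>a<m. (if z = ?e a then z ^ k else 0))" .
  qed
  also have "\<dots> = (\<Sum>a<m. \<Sum>z\<in>EE m. (if z = ?e a then z ^ k else 0))"
    by (rule sum.swap)
  also have "\<dots> = (\<Sum>a<m. ?e a ^ k)"
  proof (rule sum.cong[OF refl])
    fix a assume "a \<in> {..<m}"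
    then have "?e a \<in> EE m" unfolding EE_def by auto
    then show "(\<Sum>z\<in>EE m. (if z = ?e a then z ^ k else 0)) = ?e a ^ k"
      using EE_fin by (simp add: sum.delta')
  qed
  finally show ?thesis .
qed

lemma root_sum: assumes t: "t > 0"
  shows "(\<Sum>a<t. exp (2 * of_real pi * \<i> * of_nat a / of_nat t) ^ k) = (if t dvd k then of_nat t else 0)"
proof -
  define \<zeta> where "\<zeta> = exp (2 * of_real pi * \<i> / of_nat t)"
  have e: "exp (2 * of_real pi * \<i> * of_nat a / of_nat t) ^ k = (\<zeta> ^ k) ^ a" for a
  proof -
    have "exp (2 * of_real pi * \<i> * of_nat a / of_nat t) = exp (of_nat a * (2 * of_real pi * \<i> / of_nat t))"
      by (simp add: field_simps)
    also have "\<dots> = \<zeta> ^ a" unfolding \<zeta>_def by (rule exp_of_nat_mult)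
    finally show ?thesis by (simp add: power_mult[symmetric] mult.commute)
  qed
  have zt: "\<zeta> ^ t = 1" unfolding \<zeta>_def using root_unity_dvd[OF t] by simp
  have zk: "\<zeta> ^ k = 1 \<longleftrightarrow> t dvd k" unfolding \<zeta>_def using root_unity_dvd[OF t] by simp
  show ?thesis
  proof (cases "t dvd k")
    case True
    then show ?thesis using zk by (simp add: e)
  next
    case False
    then have "\<zeta> ^ k \<noteq> 1" using zk by simp
    moreover have "(\<zeta> ^ k) ^ t = (\<zeta> ^ t) ^ k" by (simp only: power_mult[symmetric] mult.commute)
    then have "(\<zeta> ^ k) ^ t = 1" using zt by simp
    ultimately show ?thesis using False by (simp add: e geometric_sum)
  qed
qed

lemma lef_lin:
  assumes "finite {z. x z \<noteq> 0}" "finite {z. y z \<noteq> 0}"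
  shows "lefschetz (\<lambda>z. c * x z - y z) k = of_rat c * lefschetz x k - lefschetz y k"
proof -
  let ?A = "{z. x z \<noteq> 0} \<union> {z. y z \<noteq> 0}"
  have fA: "finite ?A" using assms by simp
  have "lefschetz (\<lambda>z. c * x z - y z) k = (\<Sum>z\<in>?A. of_rat (c * x z - y z) * z ^ k)"
    by (rule lef_sup[OF fA]) auto
  also have "\<dots> = of_rat c * (\<Sum>z\<in>?A. of_rat (x z) * z ^ k) - (\<Sum>z\<in>?A. of_rat (y z) * z ^ k)"
    by (simp add: of_rat_diff of_rat_mult sum_distrib_left sum_subtractf algebra_simps)
  also have "(\<Sum>z\<in>?A. of_rat (x z) * z ^ k) = lefschetz x k"
    by (rule lef_sup[symmetric, OF fA]) auto
  also have "(\<Sum>z\<in>?A. of_rat (y z) * z ^ k) = lefschetz y k"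
    by (rule lef_sup[symmetric, OF fA]) auto
  finally show ?thesis .
qed

lemma Lambda_fin: "finite {z. Lambda m z \<noteq> 0}"
  by (rule finite_subset[OF Lambda_supp EE_fin])

lemma lef_factor:
  assumes t: "t > 0"
  shows "lefschetz (\<lambda>z. (1 / of_nat s) * Lambda t z - Lambda 1 z) k =
     of_rat (1 / of_nat s) * (if t dvd k then of_nat t else 0) - 1"
proof -
  have "lefschetz (\<lambda>z. (1 / of_nat s) * Lambda t z - Lambda 1 z) k =
     of_rat (1 / of_nat s) * lefschetz (Lambda t) k - lefschetz (Lambda 1) k"
    by (rule lef_lin[OF Lambda_fin Lambda_fin])
  also have "lefschetz (Lambda t) k = (if t dvd k then of_nat t else 0)"
    by (simp only: lef_Lambda root_sum[OF t])
  also have "lefschetz (Lambda 1) k = 1"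
    using root_sum[of 1 k] by (simp only: lef_Lambda) simp
  finally show ?thesis .
qed

lemma factor_fin: "finite {z. (1 / of_nat s) * Lambda t z - Lambda 1 z \<noteq> 0}"
proof -
  have "{z. (1 / of_nat s) * Lambda t z - Lambda 1 z \<noteq> 0} \<subseteq> {z. Lambda t z \<noteq> 0} \<union> {z. Lambda 1 z \<noteq> 0}"
    by auto
  then show ?thesis by (rule finite_subset) (simp add: Lambda_fin)
qed




lemma pw_factor: "(pw a :: 'a::comm_ring_1 poly) = [:-1, 1:] * (\<Sum>i<a. [:0, 1:] ^ i)"
proof -
  have "(pw a :: 'a poly) = [:0, 1:] ^ a - 1" by (simp add: pw_def monom_altdef)
  also have "\<dots> = ([:0, 1:] - 1) * (\<Sum>i<a. [:0, 1:] ^ i)" by (rule power_diff_1_eq)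
  also have "([:0, 1:] - 1 :: 'a poly) = [:-1, 1:]" by (simp add: one_pCons)
  finally show ?thesis .
qed

lemma poly_geo1: "poly (\<Sum>i<a. [:0, 1:] ^ i) (1::int) = int a"
  by (simp add: poly_sum)

lemma PP_factor: "(PP I f :: int poly) = [:-1, 1:] ^ card I * (\<Prod>j\<in>I. \<Sum>i<f j. [:0, 1:] ^ i)"
proof -
  have "(PP I f :: int poly) = (\<Prod>j\<in>I. [:-1, 1:] * (\<Sum>i<f j. [:0, 1:] ^ i))"
    unfolding PP_def by (simp only: pw_factor)
  also have "\<dots> = [:-1, 1:] ^ card I * (\<Prod>j\<in>I. \<Sum>i<f j. [:0, 1:] ^ i)"
    by (simp only: prod.distrib prod_constant)
  finally show ?thesis .
qed

lemma PP_eval: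
  assumes fin: "finite I" and e: "(PP I a :: int poly) = PP I b * q"
  shows "(\<Prod>j\<in>I. int (a j)) = (\<Prod>j\<in>I. int (b j)) * poly q 1"
proof -
  let ?G = "\<lambda>f. (\<Prod>j\<in>I. \<Sum>i<f j. [:0, 1:] ^ i) :: int poly"
  have "[:-1, 1:] ^ card I * ?G a = [:-1, 1:] ^ card I * (?G b * q)"
    using e by (simp add: PP_factor mult.assoc)
  moreover have "([:-1, 1:] :: int poly) ^ card I \<noteq> 0" by simp
  ultimately have "?G a = ?G b * q" by (metis mult_left_cancel)
  then have "poly (?G a) 1 = poly (?G b * q) 1" by simp
  then show ?thesis by (simp add: poly_prod poly_geo1)
qed




lemma tn_pos: "d > 0 \<Longrightarrow> tn v d j > 0"
  unfolding tn_def by (metis div_greater_zero_iff gcd_le2_nat gcd_pos_nat not_gr0)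

lemma tn_dvd_d: "tn v d j dvd d"
  unfolding tn_def by (metis dvd_div_mult_self dvd_triv_left gcd_dvd2)

lemma tn_dvd_dw: "j \<in> {1..n} \<Longrightarrow> tn v d j dvd dw n v d"
  unfolding dw_def by (rule dvd_Lcm) simp

lemma dw_dvd_d: "dw n v d dvd d"
  unfolding dw_def by (rule Lcm_least) (auto simp: tn_dvd_d)

lemma Mset_gcd: "Mset n v d k = Mset n v d (gcd k (dw n v d))"
  unfolding Mset_def using tn_dvd_dw by auto

lemma tn_dvd_iff:
  assumes d: "d > 0" and g: "g > 0" "g dvd d"
  shows "tn v d j dvd g \<longleftrightarrow> (d div g) dvd v j"
proof -
  let ?h = "gcd (v j) d"
  have h0: "?h \<noteq> 0" using d by simp
  have "tn v d j dvd g \<longleftrightarrow> d dvd g * ?h"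
    unfolding tn_def by (rule div_dvd_iff_mult[OF h0]) simp
  also have "\<dots> \<longleftrightarrow> d div g dvd ?h"
    using div_dvd_iff_mult[of g d ?h] g by (simp add: mult.commute)
  also have "\<dots> \<longleftrightarrow> d div g dvd v j"
  proof -
    have "d div g dvd d" using g by (metis dvd_div_mult_self dvd_triv_left)
    then show ?thesis by simp
  qed
  finally show ?thesis .
qed

lemma Mset_char:
  assumes d: "d > 0" and k: "k > 0"
  shows "Mset n v d (gcd k (dw n v d)) = {j\<in>{1..n}. (d div gcd k (dw n v d)) dvd v j}"
proof -
  let ?g = "gcd k (dw n v d)"
  have g: "?g > 0" "?g dvd d" using k dw_dvd_d[of n v d] by (auto intro: dvd_trans)
  show ?thesis unfolding Mset_def using tn_dvd_iff[OF d g] by blast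
qed

lemma ts_eq:
  assumes "d > 0"
  shows "tn v d j * v j = sn v d j * d"
proof -
  let ?h = "gcd (v j) d"
  have "tn v d j * v j = v j * (d div ?h)" unfolding tn_def by simp
  also have "\<dots> = v j * d div ?h" by (rule div_mult_swap) simp
  also have "\<dots> = d * (v j div ?h)" by (subst div_mult_swap) (simp_all add: mult.commute)
  finally show ?thesis unfolding sn_def by (simp add: mult.commute)
qed

lemma factor_val:
  assumes d: "d > 0" and vj: "0 < v j" "v j < d"
  shows "(of_rat (1 / of_nat (sn v d j)) * of_nat (tn v d j) - 1 :: complex) = of_nat (d - v j) / of_nat (v j)"
proof -
  have e: "of_nat (tn v d j) * of_nat (v j) = (of_nat (sn v d j) * of_nat d :: complex)"
    using ts_eq[OF d, of v j] by (metis of_nat_mult)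
  have g1: "gcd (v j) d \<le> v j" using vj by (simp add: gcd_le1_nat)
  have g2: "gcd (v j) d \<noteq> 0" using vj by simp
  have s0: "sn v d j \<noteq> 0" unfolding sn_def div_eq_0_iff using g1 g2 by linarith
  have "(of_rat (1 / of_nat (sn v d j)) * of_nat (tn v d j) :: complex) = of_nat (tn v d j) / of_nat (sn v d j)"
    by (simp add: of_rat_divide)
  also have "\<dots> = of_nat d / of_nat (v j)" using e s0 vj by (simp add: field_simps)
  finally show ?thesis using vj by (simp add: of_nat_diff field_simps)
qed

lemma lef_formula:
  assumes d: "d > 0" and pos: "\<forall>i\<in>{1..n}. 0 < v i \<and> v i < d"
  shows "lefschetz (Dw n v d) k = of_rat ((-1) ^ (n - card (Mset n v d k)) * mu n v d k)"
proof -
  define f where "f = (\<lambda>j. (\<lambda>z. (1 / of_nat (sn v d j)) * Lambda (tn v d j) z - Lambda 1 z))"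
  define M where "M = Mset n v d k"
  define c where "c = (\<lambda>j. of_nat (d - v j) / of_nat (v j) :: complex)"
  have Dw: "Dw n v d = gr_prod f n" unfolding Dw_def f_def by simp
  have "lefschetz (Dw n v d) k = (\<Prod>j\<in>{1..n}. lefschetz (f j) k)"
    unfolding Dw using gr_prod_fin_lef[of n f k] factor_fin unfolding f_def by blast
  also have "\<dots> = (\<Prod>j\<in>{1..n}. if j \<in> M then c j else -1)"
  proof (rule prod.cong[OF refl])
    fix j assume j: "j \<in> {1..n}"
    have "lefschetz (f j) k = of_rat (1 / of_nat (sn v d j)) * (if tn v d j dvd k then of_nat (tn v d j) else 0) - 1"
      unfolding f_def by (rule lef_factor[OF tn_pos[OF d]])
    moreover have vj: "0 < v j" "v j < d" using pos j by auto
    moreover have fv: "(of_rat (1 / of_nat (sn v d j)) * of_nat (tn v d j) - 1 :: complex) = c j"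
      using factor_val[of d v j, OF d vj] unfolding c_def .
    ultimately show "lefschetz (f j) k = (if j \<in> M then c j else -1)"
      using j by (cases "tn v d j dvd k") (simp_all add: M_def Mset_def)
  qed
  also have "\<dots> = (\<Prod>j\<in>M. c j) * (-1) ^ (n - card M)"
  proof -
    have MN: "M \<subseteq> {1..n}" unfolding M_def Mset_def by auto
    have u: "{1..n} = M \<union> ({1..n} - M)" using MN by auto
    have "(\<Prod>j\<in>{1..n}. if j \<in> M then c j else -1) =
          (\<Prod>j\<in>M. if j \<in> M then c j else -1) * (\<Prod>j\<in>{1..n} - M. if j \<in> M then c j else -1)"
      by (subst u, rule prod.union_disjoint) (use MN finite_subset in auto)
    also have "(\<Prod>j\<in>M. if j \<in> M then c j else -1) = (\<Prod>j\<in>M. c j)" by simp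
    also have "(\<Prod>j\<in>{1..n} - M. if j \<in> M then c j else -1) = (\<Prod>j\<in>{1..n} - M. -1)" by simp
    also have "\<dots> = (-1) ^ (n - card M)"
      using MN by (simp add: card_Diff_subset finite_subset)
    finally show ?thesis .
  qed
  also have "\<dots> = of_rat ((-1) ^ (n - card (Mset n v d k)) * mu n v d k)"
    unfolding mu_def M_def c_def by (simp add: of_rat_mult of_rat_prod of_rat_divide of_rat_power mult.commute)
  finally show ?thesis .
qed

lemma mu_nz:
  assumes pos: "\<forall>i\<in>{1..n}. 0 < v i \<and> v i < d"
  shows "mu n v d k \<noteq> 0"
proof -
  have "mu n v d k > 0" unfolding mu_def
  proof (rule prod_pos)
    fix j assume "j \<in> Mset n v d k"
    then have "0 < v j" "v j < d" using pos unfolding Mset_def by auto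
    then show "0 < (of_nat (d - v j) / of_nat (v j) :: rat)" by simp
  qed
  then show ?thesis by simp
qed

lemma mu_nonneg: "mu n v d k \<ge> 0"
  unfolding mu_def by (rule prod_nonneg) simp

lemma mu_Nats:
  assumes d: "d > 0" and pos: "\<forall>i\<in>{1..n}. 0 < v i \<and> v i < d" and C: "C2bar n v d"
    and k: "k > 0"
  shows "mu n v d k \<in> \<nat>"
proof -
  define g where "g = gcd k (dw n v d)"
  define M where "M = Mset n v d k"
  have MN: "M \<subseteq> {1..n}" unfolding M_def Mset_def by auto
  have finM: "finite M" using MN finite_subset by blast
  have Mc: "M = {j\<in>{1..n}. (d div g) dvd v j}"
    unfolding M_def g_def using Mset_gcd Mset_char[OF d k] by simp
  have gd: "g dvd d" unfolding g_def using dw_dvd_d[of n v d] by (auto intro: dvd_trans)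
  have md: "d div g dvd d" using gd by (metis dvd_div_mult_self dvd_triv_left)
  have cnt: "card {j\<in>M. x ^ v j = 1} \<le> card {j\<in>M. x ^ (d - v j) = 1}" for x :: complex
    by (rule C2_count[OF C pos Mc md])
  have "(PP M v :: int poly) dvd PP M (\<lambda>j. d - v j)"
    by (rule PP_dvd[OF finM]) (use MN pos cnt in auto)
  then obtain q where q: "(PP M (\<lambda>j. d - v j) :: int poly) = PP M v * q" by (elim dvdE)
  have ev: "(\<Prod>j\<in>M. int (d - v j)) = (\<Prod>j\<in>M. int (v j)) * poly q 1"
    by (rule PP_eval[OF finM q])
  have "(\<Prod>j\<in>M. (of_nat (v j) :: rat)) > 0"
  proof (rule prod_pos)
    fix j assume "j \<in> M"
    then have "0 < v j" using pos MN by auto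
    then show "0 < (of_nat (v j) :: rat)" by simp
  qed
  then have vnz: "(\<Prod>j\<in>M. (of_nat (v j) :: rat)) \<noteq> 0" by simp
  have "mu n v d k = (\<Prod>j\<in>M. (of_nat (d - v j) :: rat)) / (\<Prod>j\<in>M. of_nat (v j))"
    unfolding mu_def M_def by (rule prod_dividef)
  also have "(\<Prod>j\<in>M. (of_nat (d - v j) :: rat)) = of_int (\<Prod>j\<in>M. int (d - v j))" by simp
  also have "\<dots> = (\<Prod>j\<in>M. of_nat (v j)) * of_int (poly q 1)" unfolding ev by simp
  finally have mq: "mu n v d k = of_int (poly q 1)" using vnz by simp
  then have "poly q 1 \<ge> 0" using mu_nonneg[of n v d k] by simp
  then have "mu n v d k = of_nat (nat (poly q 1))" using mq by simp
  then show ?thesis by (simp add: of_nat_in_Nats)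
qed

lemma prod_Fract: "finite I \<Longrightarrow> (\<Prod>j\<in>I. Fract (f j) (g j)) = Fract (\<Prod>j\<in>I. f j) (\<Prod>j\<in>I. g j)"
  by (induction I rule: finite_induct) (simp_all add: One_fract_def)

lemma rho_eq: "rho n v d = Fract (ip (monom 1 (\<Sum>j\<in>{1..n}. v j) * PP {1..n} (\<lambda>j. d - v j))) (ip (PP {1..n} v))"
  unfolding rho_def by (simp add: prod_Fract PP_def pw_def ip_prod)

lemma rho_iff:
  assumes d: "d > 0" and pos: "\<forall>i\<in>{1..n}. 0 < v i \<and> v i < d"
  shows "C2bar n v d \<longleftrightarrow> (\<exists>p :: int poly. rho n v d = Fract (map_poly of_int p) 1)"
proof -
  let ?S = "\<Sum>j\<in>{1..n}. v j"
  let ?A = "PP {1..n} (\<lambda>j. d - v j) :: int poly"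
  let ?B = "PP {1..n} v :: int poly"
  have Bnz: "(ip ?B :: rat poly) \<noteq> 0" using PP_nz[of "{1..n}" v] pos by simp
  have eq: "rho n v d = Fract (map_poly of_int p) 1 \<longleftrightarrow> monom 1 ?S * ?A = p * ?B" for p
  proof -
    have "rho n v d = Fract (map_poly of_int p) 1 \<longleftrightarrow> (ip (monom 1 ?S * ?A) :: rat poly) = ip p * ip ?B"
      unfolding rho_eq ip_def[symmetric] using Bnz by (simp add: eq_fract)
    also have "\<dots> \<longleftrightarrow> monom 1 ?S * ?A = p * ?B"
      using ip_inj[of "monom 1 ?S * ?A" "p * ?B", where 'a=rat] by simp
    finally show ?thesis .
  qed
  show ?thesis
  proof
    assume C: "C2bar n v d"
    have M1: "{1..n} = {j\<in>{1..n}. 1 dvd v j}" by auto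
    have cnt: "card {j\<in>{1..n}. x ^ v j = 1} \<le> card {j\<in>{1..n}. x ^ (d - v j) = 1}" for x :: complex
      using C2_count[OF C pos M1, of x] by simp
    have "?B dvd ?A" by (rule PP_dvd) (use pos cnt in auto)
    then obtain q where q: "?A = ?B * q" by (elim dvdE)
    have "monom 1 ?S * ?A = (monom 1 ?S * q) * ?B" unfolding q by (simp add: ac_simps)
    then show "\<exists>p :: int poly. rho n v d = Fract (map_poly of_int p) 1" using eq by blast
  next
    assume "\<exists>p :: int poly. rho n v d = Fract (map_poly of_int p) 1"
    then obtain p :: "int poly" where "monom 1 ?S * ?A = p * ?B" using eq by blast
    then have cnt: "card {j\<in>{1..n}. x ^ v j = 1} \<le> card {j\<in>{1..n}. x ^ (d - v j) = 1}"
      if "x \<noteq> 0" for x :: complex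
      by (rule PP_dvd_conv[rotated 3, OF _ that]) (use pos in auto)
    show "C2bar n v d" by (rule count_C2[OF pos cnt])
  qed
qed



theorem lemma3p7:
  fixes n d :: nat and v :: "nat \<Rightarrow> nat"
  assumes "d > 0"
    and "\<forall>i\<in>{1..n}. 0 < v i \<and> v i < d"
  shows "(\<forall>k>0. Mset n v d k = Mset n v d (gcd k (dw n v d))
            \<and> Mset n v d (gcd k (dw n v d)) = {j\<in>{1..n}. (d div gcd k (dw n v d)) dvd v j}
            \<and> mu n v d k = mu n v d (gcd k (dw n v d)))
    \<and> (\<forall>k>0. lefschetz (Dw n v d) k = lefschetz (Dw n v d) (gcd k (dw n v d))
            \<and> lefschetz (Dw n v d) k = of_rat ((-1) ^ (n - card (Mset n v d k)) * mu n v d k)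
            \<and> (-1) ^ (n - card (Mset n v d k)) * mu n v d k \<noteq> 0)
    \<and> (C2bar n v d \<longrightarrow> (\<forall>k>0. mu n v d k \<in> \<nat>))
    \<and> (C2bar n v d \<longleftrightarrow> (\<exists>p :: int poly. rho n v d = Fract (map_poly of_int p) 1))"
proof -
  note d = assms(1) and pos = assms(2)
  have M1: "Mset n v d k = Mset n v d (gcd k (dw n v d))" for k by (rule Mset_gcd)
  have mu1: "mu n v d k = mu n v d (gcd k (dw n v d))" for k
    unfolding mu_def by (simp only: M1[of k])
  have A: "\<forall>k>0. Mset n v d k = Mset n v d (gcd k (dw n v d))
            \<and> Mset n v d (gcd k (dw n v d)) = {j\<in>{1..n}. (d div gcd k (dw n v d)) dvd v j}
            \<and> mu n v d k = mu n v d (gcd k (dw n v d))"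
    using M1 mu1 Mset_char[OF d] by blast
  have B: "\<forall>k>0. lefschetz (Dw n v d) k = lefschetz (Dw n v d) (gcd k (dw n v d))
            \<and> lefschetz (Dw n v d) k = of_rat ((-1) ^ (n - card (Mset n v d k)) * mu n v d k)
            \<and> (-1) ^ (n - card (Mset n v d k)) * mu n v d k \<noteq> 0"
  proof (intro allI impI conjI)
    fix k :: nat assume k: "k > 0"
    show L: "lefschetz (Dw n v d) k = of_rat ((-1) ^ (n - card (Mset n v d k)) * mu n v d k)"
      by (rule lef_formula[OF d pos])
    have "lefschetz (Dw n v d) (gcd k (dw n v d)) =
        of_rat ((-1) ^ (n - card (Mset n v d (gcd k (dw n v d)))) * mu n v d (gcd k (dw n v d)))"
      by (rule lef_formula[OF d pos])
    then show "lefschetz (Dw n v d) k = lefschetz (Dw n v d) (gcd k (dw n v d))"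
      using L by (simp only: M1[of k, symmetric] mu1[of k, symmetric])
    show "(-1) ^ (n - card (Mset n v d k)) * mu n v d k \<noteq> 0"
      using mu_nz[OF pos, of k] by simp
  qed
  have C: "C2bar n v d \<longrightarrow> (\<forall>k>0. mu n v d k \<in> \<nat>)"
    using mu_Nats[OF d pos] by blast
  show ?thesis using A B C rho_iff[OF d pos] by blast
qed

end
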